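(* Let $k\in\{1,2\}$, $\xi\in\mathbb{C}$, $f:\mathbb{N}\to[0,\infty)$, and $A=\xi(a^\dagger)^k+\xi^*a^k+f(a^\dagger a)$ with domain $\mathcal{D}_0$. Suppose there exist $C>0$ and $N\in\mathbb{N}$ such that $f(n)\le Cn^{k/2}$ for all $n\ge N$. Then $A$ is essentially self-adjoint.
   Context: $\mathbb{N}=\{0,1,2,\dots\}$. $\mathcal{H}$ is a separable complex Hilbert space with orthonormal basis $(\phi_n)_{n\in\mathbb{N}}$; $\mathcal{D}_0$ is the set of finite linear combinations of the $\phi_n$. The operators $a,a^\dagger$ have domain $\mathcal{D}_0$ and act by $a\phi_n=\sqrt{n}\,\phi_{n-1}$ ($a\phi_0=0$), $a^\dagger\phi_n=\sqrt{n+1}\,\phi_{n+1}$, extended linearly. $f(a^\dagger a)$ has domain $\mathcal{D}_0$ and $f(a^\dagger a)\phi_n=f(n)\phi_n$. *)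

theory Defs
  imports "HOL-Analysis.Analysis"
begin

text \<open>Concrete model of the separable Hilbert space: H = l2(N) of complex sequences,
  with phi_n the n-th standard unit vector. Unbounded operators are represented by graphs.\<close>

type_synonym vec = "nat \<Rightarrow> complex"

definition ell2 :: "vec set" where
  "ell2 = {x. summable (\<lambda>n. (cmod (x n))\<^sup>2)}"

definition ell2_inner :: "vec \<Rightarrow> vec \<Rightarrow> complex" where
  "ell2_inner x y = (\<Sum>n. cnj (x n) * y n)"

definition ell2_norm :: "vec \<Rightarrow> real" where
  "ell2_norm x = sqrt (\<Sum>n. (cmod (x n))\<^sup>2)"

text \<open>D_0: finite linear combinations of the basis vectors = finitely supported sequences.\<close>
definition D0 :: "vec set" where
  "D0 = {x. finite {n. x n \<noteq> 0}}"

text \<open>Annihilation: a phi_n = sqrt n phi_(n-1); on coefficients (a x)_m = sqrt(m+1) x_(m+1).\<close>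
definition ann :: "vec \<Rightarrow> vec" where
  "ann x = (\<lambda>m. complex_of_real (sqrt (real (Suc m))) * x (Suc m))"

text \<open>Creation: a^dagger phi_n = sqrt(n+1) phi_(n+1); on coefficients (a^dagger x)_m = sqrt m x_(m-1), (a^dagger x)_0 = 0.\<close>
definition cre :: "vec \<Rightarrow> vec" where
  "cre x = (\<lambda>m. if m = 0 then 0 else complex_of_real (sqrt (real m)) * x (m - 1))"

text \<open>f(a^dagger a) phi_n = f n phi_n.\<close>
definition numfun :: "(nat \<Rightarrow> real) \<Rightarrow> vec \<Rightarrow> vec" where
  "numfun f x = (\<lambda>m. complex_of_real (f m) * x m)"

definition opA :: "nat \<Rightarrow> complex \<Rightarrow> (nat \<Rightarrow> real) \<Rightarrow> vec \<Rightarrow> vec" where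
  "opA k \<xi> f x = (\<lambda>m. \<xi> * (cre ^^ k) x m + cnj \<xi> * (ann ^^ k) x m + numfun f x m)"

definition graph_of :: "vec set \<Rightarrow> (vec \<Rightarrow> vec) \<Rightarrow> (vec \<times> vec) set" where
  "graph_of D T = {(x, T x) | x. x \<in> D}"

definition graph_closure :: "(vec \<times> vec) set \<Rightarrow> (vec \<times> vec) set" where
  "graph_closure G = {(x, y). x \<in> ell2 \<and> y \<in> ell2 \<and>
     (\<exists>X Y. (\<forall>m. (X m, Y m) \<in> G) \<and>
        (\<lambda>m. ell2_norm (X m - x)) \<longlonglongrightarrow> 0 \<and>
        (\<lambda>m. ell2_norm (Y m - y)) \<longlonglongrightarrow> 0)}"

definition graph_adjoint :: "(vec \<times> vec) set \<Rightarrow> (vec \<times> vec) set" where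
  "graph_adjoint G = {(y, z). y \<in> ell2 \<and> z \<in> ell2 \<and>
     (\<forall>(x, w) \<in> G. ell2_inner w y = ell2_inner x z)}"

definition self_adjoint_graph :: "(vec \<times> vec) set \<Rightarrow> bool" where
  "self_adjoint_graph G \<longleftrightarrow> graph_adjoint G = G"

definition essentially_self_adjoint :: "vec set \<Rightarrow> (vec \<Rightarrow> vec) \<Rightarrow> bool" where
  "essentially_self_adjoint D T \<longleftrightarrow> self_adjoint_graph (graph_closure (graph_of D T))"

end

theory Submission
  imports Defs
begin

lemma D0_iff: "u \<in> D0 \<longleftrightarrow> (\<exists>M. \<forall>n\<ge>M. u n = 0)"
proof
  assume "u \<in> D0"
  then have "finite {n. u n \<noteq> 0}" by (simp add: D0_def)
  then obtain M where "{n. u n \<noteq> 0} \<subseteq> {..<M}" by (auto simp: finite_nat_set_iff_bounded)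
  then show "\<exists>M. \<forall>n\<ge>M. u n = 0" by (intro exI[of _ M]) (auto simp: subset_iff not_less[symmetric])
next
  assume "\<exists>M. \<forall>n\<ge>M. u n = 0"
  then obtain M where "\<forall>n\<ge>M. u n = 0" by blast
  then have "{n. u n \<noteq> 0} \<subseteq> {..<M}" using not_le by blast
  then show "u \<in> D0" unfolding D0_def using finite_subset by blast
qed

lemma inner_fin1:
  assumes "\<And>n. n \<ge> M \<Longrightarrow> u n = 0"
  shows "ell2_inner u v = (\<Sum>n<M. cnj (u n) * v n)"
  unfolding ell2_inner_def by (rule suminf_finite) (auto simp: assms)

lemma inner_fin2:
  assumes "\<And>n. n \<ge> M \<Longrightarrow> v n = 0"
  shows "ell2_inner u v = (\<Sum>n<M. cnj (u n) * v n)"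
  unfolding ell2_inner_def by (rule suminf_finite) (auto simp: assms)

lemma D0_ell2: "u \<in> D0 \<Longrightarrow> u \<in> ell2"
proof -
  assume "u \<in> D0"
  then obtain M where M: "\<forall>n\<ge>M. u n = 0" by (auto simp: D0_iff)
  have "(\<lambda>n. (cmod (u n))\<^sup>2) sums (\<Sum>n<M. (cmod (u n))\<^sup>2)"
    by (rule sums_finite) (auto simp: M)
  then show ?thesis unfolding ell2_def by (auto simp: sums_iff)
qed

lemma cre_zero: "(\<And>n. n \<ge> M \<Longrightarrow> u n = 0) \<Longrightarrow> n \<ge> Suc M \<Longrightarrow> cre u n = 0"
  by (auto simp: cre_def)

lemma ann_zero: "(\<And>n. n \<ge> M \<Longrightarrow> u n = 0) \<Longrightarrow> n \<ge> M \<Longrightarrow> ann u n = 0"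
  by (auto simp: ann_def)

lemma crep_zero: "(\<And>n. n \<ge> M \<Longrightarrow> u n = 0) \<Longrightarrow> n \<ge> M + j \<Longrightarrow> (cre ^^ j) u n = 0"
proof (induction j arbitrary: n)
  case 0 then show ?case by simp
next
  case (Suc j) then show ?case by (simp add: cre_zero[of "M+j"])
qed

lemma annp_zero: "(\<And>n. n \<ge> M \<Longrightarrow> u n = 0) \<Longrightarrow> n \<ge> M \<Longrightarrow> (ann ^^ j) u n = 0"
proof (induction j arbitrary: n)
  case 0 then show ?case by simp
next
  case (Suc j) then show ?case by (simp add: ann_zero[of "M"])
qed

lemma cre_D0: "u \<in> D0 \<Longrightarrow> cre u \<in> D0"
  by (auto simp: D0_iff intro: cre_zero)
lemma ann_D0: "u \<in> D0 \<Longrightarrow> ann u \<in> D0"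
  by (auto simp: D0_iff intro: ann_zero)
lemma crep_D0: "u \<in> D0 \<Longrightarrow> (cre ^^ j) u \<in> D0"
  by (induction j) (auto intro: cre_D0)
lemma annp_D0: "u \<in> D0 \<Longrightarrow> (ann ^^ j) u \<in> D0"
  by (induction j) (auto intro: ann_D0)

lemma adj_cre:
  assumes "u \<in> D0" shows "ell2_inner (cre u) v = ell2_inner u (ann v)"
proof -
  obtain M where M: "\<And>n. n\<ge>M \<Longrightarrow> u n = 0" using assms by (auto simp: D0_iff)
  have "ell2_inner (cre u) v = (\<Sum>n<Suc M. cnj (cre u n) * v n)"
    by (rule inner_fin1) (rule cre_zero[OF M])
  also have "\<dots> = (\<Sum>n<M. cnj (cre u (Suc n)) * v (Suc n))"
    by (subst sum.lessThan_Suc_shift) (simp add: cre_def)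
  also have "\<dots> = (\<Sum>n<M. cnj (u n) * ann v n)"
    by (simp add: cre_def ann_def mult_ac)
  also have "\<dots> = ell2_inner u (ann v)"
    by (rule inner_fin1[symmetric]) (rule M)
  finally show ?thesis .
qed

lemma adj_ann:
  assumes "u \<in> D0" shows "ell2_inner (ann u) v = ell2_inner u (cre v)"
proof -
  obtain M where M: "\<And>n. n\<ge>M \<Longrightarrow> u n = 0" using assms by (auto simp: D0_iff)
  have M': "\<And>n. n\<ge>Suc M \<Longrightarrow> u n = 0" using M by simp
  have "ell2_inner (ann u) v = (\<Sum>n<M. cnj (ann u n) * v n)"
    by (rule inner_fin1) (rule ann_zero[OF M])
  also have "\<dots> = (\<Sum>n<M. cnj (u (Suc n)) * cre v (Suc n))"
    by (simp add: cre_def ann_def mult_ac)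
  also have "\<dots> = (\<Sum>n<Suc M. cnj (u n) * cre v n)"
    by (subst sum.lessThan_Suc_shift) (simp add: cre_def)
  also have "\<dots> = ell2_inner u (cre v)"
    by (rule inner_fin1[symmetric]) (rule M')
  finally show ?thesis .
qed

lemma adj_crep: "u \<in> D0 \<Longrightarrow> ell2_inner ((cre ^^ j) u) v = ell2_inner u ((ann ^^ j) v)"
proof (induction j arbitrary: u v)
  case 0 then show ?case by simp
next
  case (Suc j)
  have "ell2_inner ((cre ^^ Suc j) u) v = ell2_inner (cre ((cre ^^ j) u)) v" by simp
  also have "\<dots> = ell2_inner ((cre ^^ j) u) (ann v)" using adj_cre crep_D0 Suc.prems by blast
  also have "\<dots> = ell2_inner u ((ann ^^ j) (ann v))" using Suc by blast
  also have "\<dots> = ell2_inner u ((ann ^^ Suc j) v)" by (simp add: funpow_Suc_right del: funpow.simps)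
  finally show ?case .
qed

lemma adj_annp: "u \<in> D0 \<Longrightarrow> ell2_inner ((ann ^^ j) u) v = ell2_inner u ((cre ^^ j) v)"
proof (induction j arbitrary: u v)
  case 0 then show ?case by simp
next
  case (Suc j)
  have "ell2_inner ((ann ^^ Suc j) u) v = ell2_inner (ann ((ann ^^ j) u)) v" by simp
  also have "\<dots> = ell2_inner ((ann ^^ j) u) (cre v)" using adj_ann annp_D0 Suc.prems by blast
  also have "\<dots> = ell2_inner u ((cre ^^ j) (cre v))" using Suc by blast
  also have "\<dots> = ell2_inner u ((cre ^^ Suc j) v)" by (simp add: funpow_Suc_right del: funpow.simps)
  finally show ?case .
qed

lemma opA_zero: "(\<And>n. n \<ge> M \<Longrightarrow> u n = 0) \<Longrightarrow> n \<ge> M + k \<Longrightarrow> opA k \<xi> f u n = 0"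
proof -
  assume M: "\<And>n. n \<ge> M \<Longrightarrow> u n = 0" and n: "n \<ge> M + k"
  have "(cre ^^ k) u n = 0" using crep_zero[OF M n] .
  moreover have "(ann ^^ k) u n = 0" using annp_zero[OF M] n by simp
  moreover have "u n = 0" using M n by simp
  ultimately show ?thesis by (simp add: opA_def numfun_def)
qed

lemma opA_D0: "u \<in> D0 \<Longrightarrow> opA k \<xi> f u \<in> D0"
  unfolding D0_iff by (metis opA_zero)

lemma opA_symm:
  assumes "u \<in> D0" shows "ell2_inner (opA k \<xi> f u) v = ell2_inner u (opA k \<xi> f v)"
proof -
  obtain M where M: "\<And>n. n\<ge>M \<Longrightarrow> u n = 0" using assms by (auto simp: D0_iff)
  define N where "N = M + k"
  have uN: "\<And>n. n \<ge> N \<Longrightarrow> u n = 0" using M N_def by simp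
  have cN: "\<And>n. n \<ge> N \<Longrightarrow> (cre ^^ k) u n = 0" using crep_zero[OF M] N_def by simp
  have aN: "\<And>n. n \<ge> N \<Longrightarrow> (ann ^^ k) u n = 0" using annp_zero[OF M] N_def by simp
  have tN: "\<And>n. n \<ge> N \<Longrightarrow> opA k \<xi> f u n = 0" using opA_zero[OF M] N_def by simp
  have "ell2_inner (opA k \<xi> f u) v = (\<Sum>n<N. cnj (opA k \<xi> f u n) * v n)"
    by (rule inner_fin1) (rule tN)
  also have "\<dots> = cnj \<xi> * (\<Sum>n<N. cnj ((cre ^^ k) u n) * v n) + \<xi> * (\<Sum>n<N. cnj ((ann ^^ k) u n) * v n)
      + (\<Sum>n<N. cnj (u n) * numfun f v n)"
    by (simp add: opA_def numfun_def sum_distrib_left sum.distrib[symmetric] algebra_simps)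
  also have "\<dots> = cnj \<xi> * ell2_inner ((cre ^^ k) u) v + \<xi> * ell2_inner ((ann ^^ k) u) v
      + (\<Sum>n<N. cnj (u n) * numfun f v n)"
    using inner_fin1[OF cN] inner_fin1[OF aN] by simp
  also have "\<dots> = cnj \<xi> * ell2_inner u ((ann ^^ k) v) + \<xi> * ell2_inner u ((cre ^^ k) v)
      + (\<Sum>n<N. cnj (u n) * numfun f v n)"
    using adj_crep[OF assms] adj_annp[OF assms] by simp
  also have "\<dots> = cnj \<xi> * (\<Sum>n<N. cnj (u n) * (ann ^^ k) v n) + \<xi> * (\<Sum>n<N. cnj (u n) * (cre ^^ k) v n)
      + (\<Sum>n<N. cnj (u n) * numfun f v n)"
    using inner_fin1[OF uN] by simp
  also have "\<dots> = (\<Sum>n<N. cnj (u n) * opA k \<xi> f v n)"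
    by (simp add: opA_def sum_distrib_left sum.distrib[symmetric] algebra_simps)
  also have "\<dots> = ell2_inner u (opA k \<xi> f v)"
    by (rule inner_fin1[symmetric]) (rule uN)
  finally show ?thesis .
qed

definition unitv :: "nat \<Rightarrow> vec" where "unitv j = (\<lambda>n. if n = j then 1 else 0)"

lemma unitv_D0: "unitv j \<in> D0"
  unfolding D0_iff unitv_def by (intro exI[of _ "Suc j"]) auto

lemma inner_unitv: "ell2_inner (unitv j) v = v j"
proof -
  have "ell2_inner (unitv j) v = (\<Sum>n<Suc j. cnj (unitv j n) * v n)"
    by (rule inner_fin1) (auto simp: unitv_def)
  also have "\<dots> = v j" by (simp add: unitv_def)
  finally show ?thesis .
qed

lemma ell2_summ: "a \<in> ell2 \<Longrightarrow> summable (\<lambda>n. (cmod (a n))\<^sup>2)"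
  by (simp add: ell2_def)

lemma ell2_prod:
  assumes a: "a \<in> ell2" and b: "b \<in> ell2"
  shows "summable (\<lambda>n. cmod (a n) * cmod (b n))"
    and "(\<Sum>n. cmod (a n) * cmod (b n)) \<le> ell2_norm a * ell2_norm b"
proof -
  have sa: "summable (\<lambda>n. (cmod (a n))\<^sup>2)" and sb: "summable (\<lambda>n. (cmod (b n))\<^sup>2)"
    using a b by (auto simp: ell2_def)
  have le: "cmod (a n) * cmod (b n) \<le> ((cmod (a n))\<^sup>2 + (cmod (b n))\<^sup>2) / 2" for n
    using sum_squares_bound[of "cmod (a n)" "cmod (b n)"] by simp
  show s: "summable (\<lambda>n. cmod (a n) * cmod (b n))"
    by (rule summable_comparison_test'[where N=0, OF summable_divide[where c=2, OF summable_add[OF sa sb]]])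
       (use le in auto)
  show "(\<Sum>n. cmod (a n) * cmod (b n)) \<le> ell2_norm a * ell2_norm b"
  proof (rule suminf_le_const[OF s])
    fix N
    have "(\<Sum>n<N. cmod (a n) * cmod (b n)) = (\<Sum>n<N. \<bar>cmod (a n)\<bar> * \<bar>cmod (b n)\<bar>)" by simp
    also have "\<dots> \<le> L2_set (\<lambda>n. cmod (a n)) {..<N} * L2_set (\<lambda>n. cmod (b n)) {..<N}"
      by (rule L2_set_mult_ineq)
    also have "\<dots> \<le> ell2_norm a * ell2_norm b"
      unfolding L2_set_def ell2_norm_def
      by (intro mult_mono real_sqrt_le_mono sum_le_suminf sa sb real_sqrt_ge_zero suminf_nonneg sum_nonneg) auto
    finally show "(\<Sum>n<N. cmod (a n) * cmod (b n)) \<le> ell2_norm a * ell2_norm b" .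
  qed
qed

lemma inner_summable:
  assumes "a \<in> ell2" "b \<in> ell2" shows "summable (\<lambda>n. cnj (a n) * b n)"
  by (rule summable_norm_cancel) (simp add: norm_mult ell2_prod(1)[OF assms])

lemma inner_bound:
  assumes "a \<in> ell2" "b \<in> ell2" shows "cmod (ell2_inner a b) \<le> ell2_norm a * ell2_norm b"
proof -
  have "cmod (ell2_inner a b) \<le> (\<Sum>n. norm (cnj (a n) * b n))"
    unfolding ell2_inner_def by (rule summable_norm) (simp add: norm_mult ell2_prod(1)[OF assms])
  also have "\<dots> = (\<Sum>n. cmod (a n) * cmod (b n))" by (simp add: norm_mult)
  also have "\<dots> \<le> ell2_norm a * ell2_norm b" by (rule ell2_prod(2)[OF assms])
  finally show ?thesis .
qed

lemma ell2_diff: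
  assumes "a \<in> ell2" "b \<in> ell2" shows "a - b \<in> ell2"
proof -
  have le: "(cmod (a n - b n))\<^sup>2 \<le> 2 * (cmod (a n))\<^sup>2 + 2 * (cmod (b n))\<^sup>2" for n
  proof -
    have "cmod (a n - b n) \<le> cmod (a n) + cmod (b n)" by (rule norm_triangle_ineq4)
    then have "(cmod (a n - b n))\<^sup>2 \<le> (cmod (a n) + cmod (b n))\<^sup>2"
      by (rule power_mono) simp_all
    also have "\<dots> \<le> 2 * (cmod (a n))\<^sup>2 + 2 * (cmod (b n))\<^sup>2"
    proof -
      have "0 \<le> (cmod (a n) - cmod (b n))\<^sup>2" by simp
      then show ?thesis unfolding power2_diff power2_sum by simp
    qed
    finally show ?thesis .
  qed
  have sm: "summable (\<lambda>n. 2 * (cmod (a n))\<^sup>2 + 2 * (cmod (b n))\<^sup>2)"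
    using assms unfolding ell2_def by (intro summable_add summable_mult) auto
  have "summable (\<lambda>n. (cmod (a n - b n))\<^sup>2)"
    by (rule summable_comparison_test'[where N=0, OF sm]) (use le in simp)
  then show ?thesis unfolding ell2_def by simp
qed


lemma inner_diff1:
  assumes "a \<in> ell2" "a' \<in> ell2" "b \<in> ell2"
  shows "ell2_inner (a - a') b = ell2_inner a b - ell2_inner a' b"
  unfolding ell2_inner_def
  by (subst suminf_diff[OF inner_summable[OF assms(1,3)] inner_summable[OF assms(2,3)]])
     (simp add: left_diff_distrib)

lemma inner_diff2:
  assumes "a \<in> ell2" "b \<in> ell2" "b' \<in> ell2"
  shows "ell2_inner a (b - b') = ell2_inner a b - ell2_inner a b'"
  unfolding ell2_inner_def
  by (subst suminf_diff[OF inner_summable[OF assms(1,2)] inner_summable[OF assms(1,3)]])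
     (simp add: right_diff_distrib)

lemma inner_cont1:
  assumes "\<And>m. A m \<in> ell2" "a \<in> ell2" "b \<in> ell2" "(\<lambda>m. ell2_norm (A m - a)) \<longlonglongrightarrow> 0"
  shows "(\<lambda>m. ell2_inner (A m) b) \<longlonglongrightarrow> ell2_inner a b"
proof -
  have "(\<lambda>m. ell2_inner (A m) b - ell2_inner a b) \<longlonglongrightarrow> 0"
  proof (rule Lim_null_comparison)
    show "\<forall>\<^sub>F m in sequentially. norm (ell2_inner (A m) b - ell2_inner a b) \<le> ell2_norm (A m - a) * ell2_norm b"
      using inner_bound[OF ell2_diff[OF assms(1,2)] assms(3)] inner_diff1[OF assms(1,2,3)] by simp
    show "(\<lambda>m. ell2_norm (A m - a) * ell2_norm b) \<longlonglongrightarrow> 0"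
      using tendsto_mult_left_zero[OF assms(4)] by simp
  qed
  then show ?thesis by (simp add: LIM_zero_iff)
qed

lemma inner_cont2:
  assumes "\<And>m. B m \<in> ell2" "a \<in> ell2" "b \<in> ell2" "(\<lambda>m. ell2_norm (B m - b)) \<longlonglongrightarrow> 0"
  shows "(\<lambda>m. ell2_inner a (B m)) \<longlonglongrightarrow> ell2_inner a b"
proof -
  have "(\<lambda>m. ell2_inner a (B m) - ell2_inner a b) \<longlonglongrightarrow> 0"
  proof (rule Lim_null_comparison)
    show "\<forall>\<^sub>F m in sequentially. norm (ell2_inner a (B m) - ell2_inner a b) \<le> ell2_norm a * ell2_norm (B m - b)"
      using inner_bound[OF assms(2) ell2_diff[OF assms(1,3)]] inner_diff2[OF assms(2,1,3)] by simp
    show "(\<lambda>m. ell2_norm a * ell2_norm (B m - b)) \<longlonglongrightarrow> 0"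
      using tendsto_mult_right_zero[OF assms(4)] by simp
  qed
  then show ?thesis by (simp add: LIM_zero_iff)
qed

definition wr :: "real \<Rightarrow> real \<Rightarrow> real" where
  "wr R x = max 0 (min 1 ((2 * R - x) / R))"

lemma wr_bounds: "0 \<le> wr R x" "wr R x \<le> 1"
  by (auto simp: wr_def)

lemma wr_one: "R > 0 \<Longrightarrow> x \<le> R \<Longrightarrow> wr R x = 1"
  by (auto simp: wr_def field_simps)

lemma wr_zero: "R > 0 \<Longrightarrow> x \<ge> 2 * R \<Longrightarrow> wr R x = 0"
  by (auto simp: wr_def field_simps)

lemma wr_lip: assumes "R > 0" shows "\<bar>wr R x - wr R x'\<bar> \<le> \<bar>x - x'\<bar> / R"
proof -
  have m: "\<bar>max 0 (min 1 s) - max 0 (min 1 t)\<bar> \<le> \<bar>s - t\<bar>" for s t :: real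
    by (auto simp: max_def min_def)
  have e: "(2 * R - x) / R - (2 * R - x') / R = (x' - x) / R" using assms by (simp add: field_simps)
  have "\<bar>(2 * R - x) / R - (2 * R - x') / R\<bar> = \<bar>x - x'\<bar> / R"
    unfolding e using assms by (simp add: abs_minus_commute)
  then show ?thesis using m[of "(2 * R - x) / R" "(2 * R - x') / R"] unfolding wr_def by simp
qed

lemma sq3: "(cmod (x + y + z))\<^sup>2 \<le> 3 * ((cmod x)\<^sup>2 + (cmod y)\<^sup>2 + (cmod z)\<^sup>2)"
proof -
  have "cmod (x + y + z) \<le> cmod x + cmod y + cmod z"
    by (metis add_mono norm_triangle_ineq order_trans order_refl)
  then have "(cmod (x + y + z))\<^sup>2 \<le> (cmod x + cmod y + cmod z)\<^sup>2"
    by (rule power_mono) simp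
  also have "\<dots> \<le> 3 * ((cmod x)\<^sup>2 + (cmod y)\<^sup>2 + (cmod z)\<^sup>2)"
  proof -
    have "0 \<le> (cmod x - cmod y)\<^sup>2 + (cmod y - cmod z)\<^sup>2 + (cmod x - cmod z)\<^sup>2" by simp
    then show ?thesis by (simp add: power2_eq_square algebra_simps)
  qed
  finally show ?thesis .
qed

lemma const64:
  assumes "k \<in> {1,2::nat}" "R \<ge> 1"
  shows "(2 * R + real k) ^ k * (real k / R)\<^sup>2 \<le> 64"
proof -
  have R0: "R > 0" using assms by simp
  have "(2 * R + real k) ^ k \<le> (4 * R) ^ k"
    using assms by (intro power_mono) auto
  then have "(2 * R + real k) ^ k * (real k / R)\<^sup>2 \<le> (4 * R) ^ k * (real k / R)\<^sup>2"
    by (rule mult_right_mono) simp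
  also have "\<dots> \<le> 64"
  proof (cases "k = 1")
    case True
    then have "(4 * R) ^ k * (real k / R)\<^sup>2 = 4 / R" using R0 by (simp add: power2_eq_square field_simps)
    also have "\<dots> \<le> 4" using assms by (simp add: field_simps)
    finally show ?thesis by simp
  next
    case False
    then have "k = 2" using assms by auto
    then have "(4 * R) ^ k * (real k / R)\<^sup>2 = 64" using R0 by (simp add: power2_eq_square field_simps)
    then show ?thesis by simp
  qed
  finally show ?thesis .
qed

lemma tail_summable:
  fixes g :: "nat \<Rightarrow> real"
  assumes "summable g" shows "summable (\<lambda>j. if m \<le> j then g j else 0)"
proof -
  have "(\<lambda>j. if j < m then g j else 0) sums (\<Sum>j\<in>{..<m}. (if j < m then g j else 0))"
    by (rule sums_finite) auto
  then have "summable (\<lambda>j. if j < m then g j else (0::real))" by (auto simp: sums_iff)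
  then have "summable (\<lambda>j. g j - (if j < m then g j else 0))" using assms by (intro summable_diff)
  moreover have "(\<lambda>j. g j - (if j < m then g j else 0)) = (\<lambda>j. if m \<le> j then g j else 0)"
    by auto
  ultimately show ?thesis by simp
qed

lemma tail_eq:
  fixes g :: "nat \<Rightarrow> real"
  assumes "summable g" shows "(\<Sum>j. if m \<le> j then g j else 0) = suminf g - (\<Sum>j<m. g j)"
proof -
  have "(\<lambda>j. if j < m then g j else 0) sums (\<Sum>j\<in>{..<m}. (if j < m then g j else 0))"
    by (rule sums_finite) auto
  then have s1: "(\<lambda>j. if j < m then g j else (0::real)) sums (\<Sum>j<m. g j)" by simp
  have "(\<lambda>j. g j - (if j < m then g j else 0)) sums (suminf g - (\<Sum>j<m. g j))"
    by (rule sums_diff[OF summable_sums[OF assms] s1])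
  moreover have "(\<lambda>j. g j - (if j < m then g j else 0)) = (\<lambda>j. if m \<le> j then g j else 0)"
    by auto
  ultimately show ?thesis by (simp add: sums_iff)
qed

lemma tail_lim:
  fixes g :: "nat \<Rightarrow> real"
  assumes "summable g" shows "(\<lambda>m. \<Sum>j. if m \<le> j then g j else 0) \<longlonglongrightarrow> (0::real)"
proof -
  have "(\<lambda>m. suminf g - (\<Sum>j<m. g j)) \<longlonglongrightarrow> suminf g - suminf g"
    by (intro tendsto_diff tendsto_const summable_LIMSEQ assms)
  then show ?thesis by (simp add: tail_eq[OF assms])
qed

lemma tail_nonneg: "summable (g :: nat \<Rightarrow> real) \<Longrightarrow> (\<And>j. g j \<ge> 0) \<Longrightarrow> (\<Sum>j. if m \<le> j then g j else 0) \<ge> (0::real)"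
  by (intro suminf_nonneg tail_summable) auto

lemma shift_le:
  fixes g :: "nat \<Rightarrow> real"
  assumes "summable g" "\<And>j. g j \<ge> 0"
  shows "summable (\<lambda>n. g (n + k))" "(\<Sum>n. g (n + k)) \<le> suminf g"
proof -
  show "summable (\<lambda>n. g (n + k))" using assms by simp
  have "suminf g = (\<Sum>n. g (n + k)) + (\<Sum>i<k. g i)" by (rule suminf_split_initial_segment[OF assms(1)])
  moreover have "(\<Sum>i<k. g i) \<ge> 0" using assms by (intro sum_nonneg) auto
  ultimately show "(\<Sum>n. g (n + k)) \<le> suminf g" by simp
qed

lemma unshift_eq:
  fixes g :: "nat \<Rightarrow> real"
  assumes "summable g"
  shows "summable (\<lambda>n. if n < k then 0 else g (n - k))" "(\<Sum>n. if n < k then 0 else g (n - k)) = suminf g"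
proof -
  let ?h = "\<lambda>n. if n < k then 0 else g (n - k)"
  have e: "(\<lambda>n. ?h (n + k)) = g" by auto
  show s: "summable ?h" using assms summable_iff_shift[of ?h k] e by simp
  have "suminf ?h = (\<Sum>n. ?h (n + k)) + (\<Sum>i<k. ?h i)" by (rule suminf_split_initial_segment[OF s])
  then show "suminf ?h = suminf g" using e by simp
qed

lemma keyW:
  fixes W :: "nat \<Rightarrow> real" and m p q k :: nat and s :: real
  assumes k: "k \<in> {1,2}" and q: "q = p + k" and s: "s\<^sup>2 \<le> real q ^ k"
    and W: "W = (\<lambda>n. wr (real m + 2) (real n))"
  shows "(s * (W p - W q))\<^sup>2 \<le> 64" and "W p \<noteq> W q \<Longrightarrow> m \<le> p"
proof -
  define R where "R = real m + 2"
  have R0: "R > 0" "R \<ge> 1" by (auto simp: R_def)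
  have W1: "n \<le> m + 2 \<Longrightarrow> W n = 1" for n using wr_one[OF R0(1)] unfolding W R_def by simp
  have W0: "n \<ge> 2 * m + 4 \<Longrightarrow> W n = 0" for n using wr_zero[OF R0(1)] unfolding W R_def by simp
  show "W p \<noteq> W q \<Longrightarrow> m \<le> p"
  proof (rule ccontr)
    assume "W p \<noteq> W q" "\<not> m \<le> p"
    then have "q \<le> m + 2" using q k by auto
    then show False using W1[of q] W1[of p] q \<open>W p \<noteq> W q\<close> by auto
  qed
  show "(s * (W p - W q))\<^sup>2 \<le> 64"
  proof (cases "W p = W q")
    case True then show ?thesis by simp
  next
    case False
    then have "p < 2 * m + 4" using W0[of p] W0[of q] q by (metis le_add1 not_le order_trans)
    then have qb: "real q \<le> 2 * R + real k" using q by (simp add: R_def)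
    have "s\<^sup>2 \<le> (2 * R + real k) ^ k"
      using s power_mono[OF qb, of k] by simp
    moreover have "(W p - W q)\<^sup>2 \<le> (real k / R)\<^sup>2"
    proof -
      have "\<bar>W p - W q\<bar> \<le> \<bar>real p - real q\<bar> / R" using wr_lip[OF R0(1)] unfolding W R_def by simp
      also have "\<dots> = real k / R" using q by simp
      finally have "\<bar>W p - W q\<bar> \<le> real k / R" .
      then show ?thesis by (metis abs_ge_zero power2_abs power_mono)
    qed
    ultimately have "(s * (W p - W q))\<^sup>2 \<le> (2 * R + real k) ^ k * (real k / R)\<^sup>2"
      unfolding power_mult_distrib using R0 by (intro mult_mono) auto
    also have "\<dots> \<le> 64" by (rule const64[OF k R0(2)])
    finally show ?thesis .
  qed
qed

lemma approx:
  fixes c a :: "nat \<Rightarrow> real" and y z :: vec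
  assumes k: "k \<in> {1,2}"
    and hc: "\<And>u n. (cre ^^ k) u n = (if n < k then 0 else complex_of_real (c n) * u (n - k))"
    and ha: "\<And>u n. (ann ^^ k) u n = complex_of_real (a n) * u (n + k)"
    and bc: "\<And>n. (c n)\<^sup>2 \<le> real n ^ k" and ba: "\<And>n. (a n)\<^sup>2 \<le> real (n + k) ^ k"
    and y: "y \<in> ell2" and z: "z \<in> ell2" and zT: "z = opA k \<xi> f y"
  shows "\<exists>X. (\<forall>m. X m \<in> D0) \<and> (\<lambda>m. ell2_norm (X m - y)) \<longlonglongrightarrow> 0
            \<and> (\<lambda>m. ell2_norm (opA k \<xi> f (X m) - z)) \<longlonglongrightarrow> 0"
proof -
  define W where "W m = (\<lambda>n. wr (real m + 2) (real n))" for m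
  define X where "X m = (\<lambda>n. complex_of_real (W m n) * y n)" for m
  define gy where "gy = (\<lambda>j. (cmod (y j))\<^sup>2)"
  define gz where "gz = (\<lambda>j. (cmod (z j))\<^sup>2)"
  define gm where "gm m = (\<lambda>j. if m \<le> j then gy j else 0)" for m
  define hm where "hm m = (\<lambda>j. if m \<le> j then gz j else 0)" for m
  define ty where "ty m = suminf (gm m)" for m
  define tz where "tz m = suminf (hm m)" for m
  have sgy: "summable gy" using y by (simp add: ell2_def gy_def)
  have sgz: "summable gz" using z by (simp add: ell2_def gz_def)
  have gy0: "gy j \<ge> 0" "gz j \<ge> 0" for j by (auto simp: gy_def gz_def)
  have sgm: "summable (gm m)" for m unfolding gm_def by (rule tail_summable[OF sgy])
  have shm: "summable (hm m)" for m unfolding hm_def by (rule tail_summable[OF sgz])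
  have gm0: "gm m j \<ge> 0" "hm m j \<ge> 0" for m j by (auto simp: gm_def hm_def gy_def gz_def)
  have ty0: "ty m \<ge> 0" "tz m \<ge> 0" for m unfolding ty_def tz_def
    using gm0 sgm shm by (auto intro: suminf_nonneg)
  have tyl: "ty \<longlonglongrightarrow> 0" unfolding ty_def gm_def by (rule tail_lim[OF sgy])
  have tzl: "tz \<longlonglongrightarrow> 0" unfolding tz_def hm_def by (rule tail_lim[OF sgz])
  have Wb: "0 \<le> W m n" "W m n \<le> 1" for m n unfolding W_def by (auto simp: wr_bounds)
  have W1: "n \<le> m + 2 \<Longrightarrow> W m n = 1" for m n using wr_one[of "real m + 2" "real n"] unfolding W_def by simp
  have W0: "n \<ge> 2 * m + 4 \<Longrightarrow> W m n = 0" for m n using wr_zero[of "real m + 2" "real n"] unfolding W_def by simp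
  have XD0: "X m \<in> D0" for m
    unfolding D0_iff X_def by (intro exI[of _ "2 * m + 4"]) (auto simp: W0)
  have nb: "0 \<le> ell2_norm (X m - y) \<and> ell2_norm (X m - y) \<le> sqrt (ty m)" for m
  proof -
    have pw: "(cmod ((X m - y) n))\<^sup>2 \<le> gm m n" for n
    proof (cases "m \<le> n")
      case True
      have "(X m - y) n = complex_of_real (W m n - 1) * y n"
        by (simp add: X_def algebra_simps)
      then have "cmod ((X m - y) n) = \<bar>W m n - 1\<bar> * cmod (y n)"
        by (simp only: norm_mult norm_of_real)
      also have "\<dots> \<le> cmod (y n)" using Wb[of m n] by (intro mult_left_le_one_le) auto
      finally show ?thesis using True by (simp add: gm_def gy_def power_mono)
    next
      case False
      then have "W m n = 1" using W1 by simp
      then show ?thesis using False by (simp add: X_def gm_def)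
    qed
    have sm: "summable (\<lambda>n. (cmod ((X m - y) n))\<^sup>2)"
      by (rule summable_comparison_test'[where N=0, OF sgm]) (use pw in simp)
    have "(\<Sum>n. (cmod ((X m - y) n))\<^sup>2) \<le> ty m"
      unfolding ty_def by (rule suminf_le[OF pw sm sgm])
    moreover have "(\<Sum>n. (cmod ((X m - y) n))\<^sup>2) \<ge> 0" by (rule suminf_nonneg[OF sm]) simp
    ultimately show ?thesis unfolding ell2_norm_def by simp
  qed
  have partb: "(\<lambda>m. ell2_norm (X m - y)) \<longlonglongrightarrow> 0"
  proof (rule tendsto_sandwich[of "\<lambda>_. 0" _ _ "\<lambda>m. sqrt (ty m)"])
    show "\<forall>\<^sub>F m in sequentially. 0 \<le> ell2_norm (X m - y)" using nb by simp
    show "\<forall>\<^sub>F m in sequentially. ell2_norm (X m - y) \<le> sqrt (ty m)" using nb by simp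
    show "(\<lambda>_. 0) \<longlonglongrightarrow> (0::real)" by simp
    show "(\<lambda>m. sqrt (ty m)) \<longlonglongrightarrow> 0" using tendsto_real_sqrt[OF tyl] by simp
  qed
  have Texp: "opA k \<xi> f u n = \<xi> * (if n < k then 0 else complex_of_real (c n) * u (n - k))
      + cnj \<xi> * (complex_of_real (a n) * u (n + k)) + complex_of_real (f n) * u n" for u n
    by (simp add: opA_def numfun_def hc ha)
  define P where "P m n = (if n < k then 0 else complex_of_real (c n * (W m (n - k) - W m n)) * y (n - k))" for m n
  define Q where "Q m n = complex_of_real (a n * (W m (n + k) - W m n)) * y (n + k)" for m n
  have dexp: "opA k \<xi> f (X m) n - z n = \<xi> * P m n + cnj \<xi> * Q m n + complex_of_real (W m n - 1) * z n" for m n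
    unfolding zT Texp P_def Q_def X_def by (cases "n < k") (simp_all add: algebra_simps)
  define Pu where "Pu m n = (if n < k then 0 else gm m (n - k))" for m n
  have Pb: "(cmod (P m n))\<^sup>2 \<le> 64 * Pu m n" for m n
  proof (cases "n < k")
    case True then show ?thesis by (simp add: P_def Pu_def)
  next
    case False
    have q: "n = (n - k) + k" using False by simp
    have b1: "(c n * (W m (n - k) - W m n))\<^sup>2 \<le> 64" by (rule keyW(1)[OF k q bc W_def])
    have b2: "W m (n - k) \<noteq> W m n \<Longrightarrow> m \<le> n - k" by (rule keyW(2)[OF k q bc W_def])
    show ?thesis
    proof (cases "W m (n - k) = W m n")
      case True then show ?thesis using False gm0[of m "n - k"] by (simp add: P_def Pu_def)
    next
      case ne: False
      have "(cmod (P m n))\<^sup>2 = (c n * (W m (n - k) - W m n))\<^sup>2 * gy (n - k)"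
        using False by (simp add: P_def norm_mult gy_def power_mult_distrib del: of_real_diff of_real_mult)
      also have "\<dots> \<le> 64 * gy (n - k)" by (rule mult_right_mono[OF b1 gy0(1)])
      finally show ?thesis using False b2[OF ne] by (simp add: gm_def Pu_def)
    qed
  qed
  have Qb: "(cmod (Q m n))\<^sup>2 \<le> 64 * gm m (n + k)" for m n
  proof -
    have q: "n + k = n + k" ..
    have b1: "(a n * (W m n - W m (n + k)))\<^sup>2 \<le> 64" by (rule keyW(1)[OF k q ba W_def])
    have b2: "W m n \<noteq> W m (n + k) \<Longrightarrow> m \<le> n" by (rule keyW(2)[OF k q ba W_def])
    have e: "(a n * (W m (n + k) - W m n))\<^sup>2 = (a n * (W m n - W m (n + k)))\<^sup>2"
      by (simp add: power_mult_distrib power2_commute)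
    show ?thesis
    proof (cases "W m n = W m (n + k)")
      case True then show ?thesis using gm0[of m "n + k"] by (simp add: Q_def)
    next
      case ne: False
      have "(cmod (Q m n))\<^sup>2 = (a n * (W m (n + k) - W m n))\<^sup>2 * gy (n + k)"
        by (simp add: Q_def norm_mult gy_def power_mult_distrib del: of_real_diff of_real_mult)
      also have "\<dots> \<le> 64 * gy (n + k)" unfolding e by (rule mult_right_mono[OF b1 gy0(1)])
      finally show ?thesis using b2[OF ne] by (simp add: gm_def)
    qed
  qed
  have Zb: "(cmod (complex_of_real (W m n - 1) * z n))\<^sup>2 \<le> hm m n" for m n
  proof (cases "m \<le> n")
    case True
    have "cmod (complex_of_real (W m n - 1) * z n) = \<bar>W m n - 1\<bar> * cmod (z n)"
      by (simp only: norm_mult norm_of_real)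
    also have "\<dots> \<le> cmod (z n)" using Wb[of m n] by (intro mult_left_le_one_le) auto
    finally show ?thesis using True by (simp add: hm_def gz_def power_mono)
  next
    case False
    then have "W m n = 1" using W1 by simp
    then show ?thesis using False by (simp add: hm_def)
  qed
  define Bf where "Bf m n = 3 * ((cmod \<xi>)\<^sup>2 * (64 * Pu m n) + (cmod \<xi>)\<^sup>2 * (64 * gm m (n + k)) + hm m n)" for m n
  have pwc: "(cmod (opA k \<xi> f (X m) n - z n))\<^sup>2 \<le> Bf m n" for m n
  proof -
    have "(cmod (opA k \<xi> f (X m) n - z n))\<^sup>2 \<le>
        3 * ((cmod (\<xi> * P m n))\<^sup>2 + (cmod (cnj \<xi> * Q m n))\<^sup>2 + (cmod (complex_of_real (W m n - 1) * z n))\<^sup>2)"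
      unfolding dexp by (rule sq3)
    also have "\<dots> = 3 * ((cmod \<xi>)\<^sup>2 * (cmod (P m n))\<^sup>2 + (cmod \<xi>)\<^sup>2 * (cmod (Q m n))\<^sup>2 + (cmod (complex_of_real (W m n - 1) * z n))\<^sup>2)"
      by (simp add: norm_mult power_mult_distrib)
    also have "\<dots> \<le> Bf m n" unfolding Bf_def
      by (intro mult_left_mono add_mono Pb Qb Zb) auto
    finally show ?thesis .
  qed
  define S where "S m = (\<Sum>n. gm m (n + k))" for m
  have sPu: "Pu m sums ty m" for m
    using unshift_eq[OF sgm[of m], of k] unfolding Pu_def ty_def by (simp add: sums_iff)
  have sS: "(\<lambda>n. gm m (n + k)) sums S m" for m
    using sgm[of m] unfolding S_def by (simp add: sums_iff)
  have Sle: "S m \<le> ty m" for m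
    using shift_le(2)[OF sgm[of m] gm0(1), of k] unfolding S_def ty_def by simp
  have sBf: "Bf m sums (3 * ((cmod \<xi>)\<^sup>2 * (64 * ty m) + (cmod \<xi>)\<^sup>2 * (64 * S m) + tz m))" for m
    unfolding Bf_def
    by (intro sums_mult sums_add sPu sS) (use shm in \<open>simp add: tz_def sums_iff\<close>)
  define B where "B m = 3 * ((cmod \<xi>)\<^sup>2 * (128 * ty m) + tz m)" for m
  have nc: "0 \<le> ell2_norm (opA k \<xi> f (X m) - z) \<and> ell2_norm (opA k \<xi> f (X m) - z) \<le> sqrt (B m)" for m
  proof -
    have sm: "summable (\<lambda>n. (cmod (opA k \<xi> f (X m) n - z n))\<^sup>2)"
      by (rule summable_comparison_test'[where N=0, OF sums_summable[OF sBf[of m]]]) (use pwc in simp)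
    have "(\<Sum>n. (cmod (opA k \<xi> f (X m) n - z n))\<^sup>2) \<le> 3 * ((cmod \<xi>)\<^sup>2 * (64 * ty m) + (cmod \<xi>)\<^sup>2 * (64 * S m) + tz m)"
      using suminf_le[OF pwc sm sums_summable[OF sBf[of m]]] sBf[of m] by (simp add: sums_iff)
    also have "\<dots> \<le> B m" unfolding B_def using mult_left_mono[OF Sle[of m], of "(cmod \<xi>)\<^sup>2"]
      by (simp add: algebra_simps)
    finally have le: "(\<Sum>n. (cmod (opA k \<xi> f (X m) n - z n))\<^sup>2) \<le> B m" .
    moreover have "(\<Sum>n. (cmod (opA k \<xi> f (X m) n - z n))\<^sup>2) \<ge> 0" by (rule suminf_nonneg[OF sm]) simp
    ultimately show ?thesis unfolding ell2_norm_def by simp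
  qed
  have Bl: "B \<longlonglongrightarrow> 0"
  proof -
    have "(\<lambda>m. 3 * ((cmod \<xi>)\<^sup>2 * (128 * ty m) + tz m)) \<longlonglongrightarrow> 3 * ((cmod \<xi>)\<^sup>2 * (128 * 0) + 0)"
      by (intro tendsto_intros tyl tzl)
    then show ?thesis unfolding B_def by simp
  qed
  have partc: "(\<lambda>m. ell2_norm (opA k \<xi> f (X m) - z)) \<longlonglongrightarrow> 0"
  proof (rule tendsto_sandwich[of "\<lambda>_. 0" _ _ "\<lambda>m. sqrt (B m)"])
    show "\<forall>\<^sub>F m in sequentially. 0 \<le> ell2_norm (opA k \<xi> f (X m) - z)" using nc by simp
    show "\<forall>\<^sub>F m in sequentially. ell2_norm (opA k \<xi> f (X m) - z) \<le> sqrt (B m)" using nc by simp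
    show "(\<lambda>_. 0) \<longlonglongrightarrow> (0::real)" by simp
    show "(\<lambda>m. sqrt (B m)) \<longlonglongrightarrow> 0" using tendsto_real_sqrt[OF Bl] by simp
  qed
  show ?thesis using XD0 partb partc by blast
qed

lemma graph_mem: "(a, b) \<in> graph_of D0 T \<longleftrightarrow> a \<in> D0 \<and> b = T a"
  by (auto simp: graph_of_def)

lemma ess_sa_general:
  fixes c a :: "nat \<Rightarrow> real"
  assumes k: "k \<in> {1,2}"
    and hc: "\<And>u n. (cre ^^ k) u n = (if n < k then 0 else complex_of_real (c n) * u (n - k))"
    and ha: "\<And>u n. (ann ^^ k) u n = complex_of_real (a n) * u (n + k)"
    and bc: "\<And>n. (c n)\<^sup>2 \<le> real n ^ k" and ba: "\<And>n. (a n)\<^sup>2 \<le> real (n + k) ^ k"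
  shows "essentially_self_adjoint D0 (opA k \<xi> f)"
proof -
  define T where "T = opA k \<xi> f"
  define G where "G = graph_of D0 T"
  have TD0: "x \<in> D0 \<Longrightarrow> T x \<in> D0" for x unfolding T_def by (rule opA_D0)
  have Tsym: "x \<in> D0 \<Longrightarrow> ell2_inner (T x) v = ell2_inner x (T v)" for x v unfolding T_def by (rule opA_symm)
  have AC: "graph_adjoint G \<subseteq> graph_closure G"
  proof
    fix p assume p: "p \<in> graph_adjoint G"
    obtain y z where pyz: "p = (y, z)" by (cases p)
    have y: "y \<in> ell2" and z: "z \<in> ell2" and adj: "\<And>x w. (x, w) \<in> G \<Longrightarrow> ell2_inner w y = ell2_inner x z"
      using p unfolding pyz graph_adjoint_def by auto
    have zT: "z = T y"
    proof
      fix j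
      have "(unitv j, T (unitv j)) \<in> G" unfolding G_def graph_mem using unitv_D0 by simp
      then have "ell2_inner (T (unitv j)) y = ell2_inner (unitv j) z" by (rule adj)
      then show "z j = T y j" using Tsym[OF unitv_D0] by (simp add: inner_unitv)
    qed
    obtain X where X: "\<And>m. X m \<in> D0" "(\<lambda>m. ell2_norm (X m - y)) \<longlonglongrightarrow> 0"
        "(\<lambda>m. ell2_norm (T (X m) - z)) \<longlonglongrightarrow> 0"
      using approx[OF k hc ha bc ba y z zT[unfolded T_def]] unfolding T_def by blast
    have "\<exists>X' Y'. (\<forall>m. (X' m, Y' m) \<in> G) \<and> (\<lambda>m. ell2_norm (X' m - y)) \<longlonglongrightarrow> 0 \<and>
        (\<lambda>m. ell2_norm (Y' m - z)) \<longlonglongrightarrow> 0"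
      by (rule exI[of _ X], rule exI[of _ "\<lambda>m. T (X m)"]) (use X in \<open>simp add: G_def graph_mem\<close>)
    then show "p \<in> graph_closure G" unfolding pyz graph_closure_def using y z by simp
  qed
  have CA: "graph_closure G \<subseteq> graph_adjoint G"
  proof
    fix p assume p: "p \<in> graph_closure G"
    obtain x w where pxw: "p = (x, w)" by (cases p)
    obtain X Y where x: "x \<in> ell2" and w: "w \<in> ell2" and XY: "\<And>m. (X m, Y m) \<in> G"
      and lx: "(\<lambda>m. ell2_norm (X m - x)) \<longlonglongrightarrow> 0" and ly: "(\<lambda>m. ell2_norm (Y m - w)) \<longlonglongrightarrow> 0"
      using p unfolding pxw graph_closure_def by auto
    have XD: "X m \<in> D0" and YT: "Y m = T (X m)" for m using XY[of m] unfolding G_def graph_mem by auto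
    have "ell2_inner w' x = ell2_inner x' w" if "(x', w') \<in> G" for x' w'
    proof -
      have x': "x' \<in> D0" and w': "w' = T x'" using that unfolding G_def graph_mem by auto
      have l1: "(\<lambda>m. ell2_inner w' (X m)) \<longlonglongrightarrow> ell2_inner w' x"
        by (rule inner_cont2[OF D0_ell2[OF XD] _ x lx]) (simp add: w' D0_ell2 TD0 x')
      have l2: "(\<lambda>m. ell2_inner x' (Y m)) \<longlonglongrightarrow> ell2_inner x' w"
        by (rule inner_cont2[OF _ D0_ell2[OF x'] w ly]) (simp add: YT D0_ell2 TD0 XD)
      have "ell2_inner w' (X m) = ell2_inner x' (Y m)" for m
        using Tsym[OF x'] by (simp add: w' YT)
      then show ?thesis using LIMSEQ_unique[OF l1] l2 by simp
    qed
    then show "p \<in> graph_adjoint G" unfolding pxw graph_adjoint_def using x w by auto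
  qed
  have ACG: "graph_adjoint (graph_closure G) = graph_adjoint G"
  proof
    have "G \<subseteq> graph_closure G"
    proof
      fix p assume "p \<in> G"
      then obtain x where p: "p = (x, T x)" and x: "x \<in> D0" unfolding G_def graph_of_def by auto
      have "\<exists>X' Y'. (\<forall>m. (X' m, Y' m) \<in> G) \<and> (\<lambda>m. ell2_norm (X' m - x)) \<longlonglongrightarrow> 0 \<and>
          (\<lambda>m. ell2_norm (Y' m - T x)) \<longlonglongrightarrow> 0"
        by (rule exI[of _ "\<lambda>_. x"], rule exI[of _ "\<lambda>_. T x"]) (use x in \<open>simp add: G_def graph_mem ell2_norm_def\<close>)
      then show "p \<in> graph_closure G" unfolding p graph_closure_def using x D0_ell2 TD0 by simp
    qed
    then show "graph_adjoint (graph_closure G) \<subseteq> graph_adjoint G"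
      unfolding graph_adjoint_def by blast
  next
    show "graph_adjoint G \<subseteq> graph_adjoint (graph_closure G)"
    proof
      fix p assume p: "p \<in> graph_adjoint G"
      obtain y z where pyz: "p = (y, z)" by (cases p)
      have y: "y \<in> ell2" and z: "z \<in> ell2" and adj: "\<And>x w. (x, w) \<in> G \<Longrightarrow> ell2_inner w y = ell2_inner x z"
        using p unfolding pyz graph_adjoint_def by auto
      have "ell2_inner w y = ell2_inner x z" if xw: "(x, w) \<in> graph_closure G" for x w
      proof -
        obtain X Y where x: "x \<in> ell2" and w: "w \<in> ell2" and XY: "\<And>m. (X m, Y m) \<in> G"
          and lx: "(\<lambda>m. ell2_norm (X m - x)) \<longlonglongrightarrow> 0" and ly: "(\<lambda>m. ell2_norm (Y m - w)) \<longlonglongrightarrow> 0"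
          using xw unfolding graph_closure_def by auto
        have XD: "X m \<in> D0" and YT: "Y m = T (X m)" for m using XY[of m] unfolding G_def graph_mem by auto
        have l1: "(\<lambda>m. ell2_inner (Y m) y) \<longlonglongrightarrow> ell2_inner w y"
          by (rule inner_cont1[OF _ w y ly]) (simp add: YT D0_ell2 TD0 XD)
        have l2: "(\<lambda>m. ell2_inner (X m) z) \<longlonglongrightarrow> ell2_inner x z"
          by (rule inner_cont1[OF D0_ell2[OF XD] x z lx])
        have "ell2_inner (Y m) y = ell2_inner (X m) z" for m using adj[OF XY[of m]] .
        then show ?thesis using LIMSEQ_unique[OF l1] l2 by simp
      qed
      then show "p \<in> graph_adjoint (graph_closure G)" unfolding pyz graph_adjoint_def using y z by auto
    qed
  qed
  have "graph_adjoint (graph_closure G) = graph_closure G" using ACG AC CA by blast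
  then show ?thesis unfolding essentially_self_adjoint_def self_adjoint_graph_def G_def T_def .
qed

lemma case1: "essentially_self_adjoint D0 (opA 1 \<xi> f)"
proof (rule ess_sa_general[where c = "\<lambda>n. sqrt (real n)" and a = "\<lambda>n. sqrt (real n + 1)"])
  show "(1::nat) \<in> {1, 2}" by simp
  show "(cre ^^ 1) u n = (if n < 1 then 0 else complex_of_real (sqrt (real n)) * u (n - 1))" for u n
    by (simp add: cre_def)
  show "(ann ^^ 1) u n = complex_of_real (sqrt (real n + 1)) * u (n + 1)" for u n
    by (simp add: ann_def add.commute)
  show "(sqrt (real n))\<^sup>2 \<le> real n ^ 1" for n by simp
  show "(sqrt (real n + 1))\<^sup>2 \<le> real (n + 1) ^ 1" for n by simp
qed

lemma case2: "essentially_self_adjoint D0 (opA 2 \<xi> f)"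
proof (rule ess_sa_general[where c = "\<lambda>n. sqrt (real n) * sqrt (real (n - 1))"
      and a = "\<lambda>n. sqrt (real n + 1) * sqrt (real n + 2)"])
  show "(2::nat) \<in> {1, 2}" by simp
  show "(cre ^^ 2) u n = (if n < 2 then 0 else complex_of_real (sqrt (real n) * sqrt (real (n - 1))) * u (n - 2))" for u n
  proof -
    consider "n = 0" | "n = 1" | "n \<ge> 2" by linarith
    then show ?thesis
    proof cases
      case 3
      then have "n - 1 - 1 = n - 2" "n - 1 \<noteq> 0" "n \<noteq> 0" by auto
      then show ?thesis using 3 by (simp add: cre_def numeral_2_eq_2 of_nat_diff)
    qed (auto simp: cre_def numeral_2_eq_2)
  qed
  show "(ann ^^ 2) u n = complex_of_real (sqrt (real n + 1) * sqrt (real n + 2)) * u (n + 2)" for u n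
    by (simp add: ann_def numeral_2_eq_2 add_ac)
  show "(sqrt (real n) * sqrt (real (n - 1)))\<^sup>2 \<le> real n ^ 2" for n
  proof -
    have "(sqrt (real n) * sqrt (real (n - 1)))\<^sup>2 = real n * real (n - 1)"
      by (simp add: power_mult_distrib)
    also have "\<dots> \<le> real n * real n" by (intro mult_left_mono) auto
    finally show ?thesis by (simp add: power2_eq_square)
  qed
  show "(sqrt (real n + 1) * sqrt (real n + 2))\<^sup>2 \<le> real (n + 2) ^ 2" for n
  proof -
    have "(sqrt (real n + 1) * sqrt (real n + 2))\<^sup>2 = (real n + 1) * (real n + 2)"
      by (simp add: power_mult_distrib)
    also have "\<dots> \<le> (real n + 2) * (real n + 2)" by (intro mult_right_mono) auto
    also have "\<dots> = real (n + 2) ^ 2" by (simp add: power2_eq_square add.commute)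
    finally show ?thesis .
  qed
qed

theorem corollary3p2:
  fixes k :: nat and \<xi> :: complex and f :: "nat \<Rightarrow> real"
  assumes "k \<in> {1, 2}"
    and "\<And>n. f n \<ge> 0"
    and "\<exists>C > 0. \<exists>N :: nat. \<forall>n \<ge> N. f n \<le> C * real n powr (real k / 2)"
  shows "essentially_self_adjoint D0 (opA k \<xi> f)"
  using assms(1) case1 case2 by auto

end
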